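(* The equation $x\cdot y^{-1}+u\cdot v^{-1}=(x\cdot v+u\cdot y)\cdot(y\cdot v)^{-1}$ is derivable in equational logic from $\mathsf{Md}_\bot$.
   Context: The signature has one sort, constants $0,1,\bot$, binary operations $+,\cdot$ and unary operations $-$ and $(\,\cdot\,)^{-1}$; $^{-1}$ binds stronger than $\cdot$, which binds stronger than $+$. $\mathsf{Md}_\bot$ is the set of equations (variables universally quantified): $(x+y)+z=x+(y+z)$; $x+y=y+x$; $x+0=x$; $x+(-x)=0\cdot x$; $(x\cdot y)\cdot z=x\cdot(y\cdot z)$; $x\cdot y=y\cdot x$; $1\cdot x=x$; $x\cdot(y+z)=x\cdot y+x\cdot z$; $-(-x)=x$; $0\cdot(x\cdot x)=0\cdot x$; $(x^{-1})^{-1}=x+0\cdot x^{-1}$; $x\cdot x^{-1}=1+0\cdot x^{-1}$; $(x\cdot y)^{-1}=x^{-1}\cdot y^{-1}$; $1^{-1}=1$; $0^{-1}=\bot$; $x+\bot=\bot$; $x\cdot\bot=\bot$. *)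

theory Defs
  imports Main
begin

datatype trm =
    Var nat
  | Zero
  | One
  | Bot
  | Plus trm trm
  | Times trm trm
  | Neg trm
  | Inv trm

primrec subst :: "(nat \<Rightarrow> trm) \<Rightarrow> trm \<Rightarrow> trm" where
  "subst \<sigma> (Var n) = \<sigma> n"
| "subst \<sigma> Zero = Zero"
| "subst \<sigma> One = One"
| "subst \<sigma> Bot = Bot"
| "subst \<sigma> (Plus a b) = Plus (subst \<sigma> a) (subst \<sigma> b)"
| "subst \<sigma> (Times a b) = Times (subst \<sigma> a) (subst \<sigma> b)"
| "subst \<sigma> (Neg a) = Neg (subst \<sigma> a)"
| "subst \<sigma> (Inv a) = Inv (subst \<sigma> a)"

inductive derivable :: "(trm \<times> trm) set \<Rightarrow> trm \<Rightarrow> trm \<Rightarrow> bool" for E where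
  ax: "(s, t) \<in> E \<Longrightarrow> derivable E (subst \<sigma> s) (subst \<sigma> t)"
| refl: "derivable E t t"
| sym: "derivable E s t \<Longrightarrow> derivable E t s"
| trans: "derivable E s t \<Longrightarrow> derivable E t u \<Longrightarrow> derivable E s u"
| cong_plus: "derivable E s1 t1 \<Longrightarrow> derivable E s2 t2 \<Longrightarrow> derivable E (Plus s1 s2) (Plus t1 t2)"
| cong_times: "derivable E s1 t1 \<Longrightarrow> derivable E s2 t2 \<Longrightarrow> derivable E (Times s1 s2) (Times t1 t2)"
| cong_neg: "derivable E s t \<Longrightarrow> derivable E (Neg s) (Neg t)"
| cong_inv: "derivable E s t \<Longrightarrow> derivable E (Inv s) (Inv t)"

definition x :: trm where "x = Var 0"
definition y :: trm where "y = Var 1"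
definition z :: trm where "z = Var 2"

definition Md_bot :: "(trm \<times> trm) set" where
  "Md_bot = {
     (Plus (Plus x y) z, Plus x (Plus y z)),
     (Plus x y, Plus y x),
     (Plus x Zero, x),
     (Plus x (Neg x), Times Zero x),
     (Times (Times x y) z, Times x (Times y z)),
     (Times x y, Times y x),
     (Times One x, x),
     (Times x (Plus y z), Plus (Times x y) (Times x z)),
     (Neg (Neg x), x),
     (Times Zero (Times x x), Times Zero x),
     (Inv (Inv x), Plus x (Times Zero (Inv x))),
     (Times x (Inv x), Plus One (Times Zero (Inv x))),
     (Inv (Times x y), Times (Inv x) (Inv y)),
     (Inv One, One),
     (Inv Zero, Bot),
     (Plus x Bot, Bot),
     (Times x Bot, Bot)}"

end

theory Submission
  imports Defs
begin

definition sig :: "trm \<Rightarrow> trm \<Rightarrow> trm \<Rightarrow> nat \<Rightarrow> trm" where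
  "sig a b c = (\<lambda>n. if n = 0 then a else if n = 1 then b else c)"


lemma A1: "derivable Md_bot (Plus (Plus a b) c) (Plus a (Plus b c))"
  using derivable.ax[of "(Plus (Plus x y) z)" "(Plus x (Plus y z))" Md_bot "sig a b c"]
  by (simp add: Md_bot_def x_def y_def z_def sig_def)

lemma A2: "derivable Md_bot (Plus a b) (Plus b a)"
  using derivable.ax[of "(Plus x y)" "(Plus y x)" Md_bot "sig a b c"]
  by (simp add: Md_bot_def x_def y_def z_def sig_def)

lemma A3: "derivable Md_bot (Plus a Zero) a"
  using derivable.ax[of "(Plus x Zero)" "x" Md_bot "sig a b c"]
  by (simp add: Md_bot_def x_def y_def z_def sig_def)

lemma A4: "derivable Md_bot (Plus a (Neg a)) (Times Zero a)"
  using derivable.ax[of "(Plus x (Neg x))" "(Times Zero x)" Md_bot "sig a b c"]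
  by (simp add: Md_bot_def x_def y_def z_def sig_def)

lemma A5: "derivable Md_bot (Times (Times a b) c) (Times a (Times b c))"
  using derivable.ax[of "(Times (Times x y) z)" "(Times x (Times y z))" Md_bot "sig a b c"]
  by (simp add: Md_bot_def x_def y_def z_def sig_def)

lemma A6: "derivable Md_bot (Times a b) (Times b a)"
  using derivable.ax[of "(Times x y)" "(Times y x)" Md_bot "sig a b c"]
  by (simp add: Md_bot_def x_def y_def z_def sig_def)

lemma A7: "derivable Md_bot (Times One a) a"
  using derivable.ax[of "(Times One x)" "x" Md_bot "sig a b c"]
  by (simp add: Md_bot_def x_def y_def z_def sig_def)

lemma A8: "derivable Md_bot (Times a (Plus b c)) (Plus (Times a b) (Times a c))"
  using derivable.ax[of "(Times x (Plus y z))" "(Plus (Times x y) (Times x z))" Md_bot "sig a b c"]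
  by (simp add: Md_bot_def x_def y_def z_def sig_def)

lemma A9: "derivable Md_bot (Neg (Neg a)) a"
  using derivable.ax[of "(Neg (Neg x))" "x" Md_bot "sig a b c"]
  by (simp add: Md_bot_def x_def y_def z_def sig_def)

lemma A10: "derivable Md_bot (Times Zero (Times a a)) (Times Zero a)"
  using derivable.ax[of "(Times Zero (Times x x))" "(Times Zero x)" Md_bot "sig a b c"]
  by (simp add: Md_bot_def x_def y_def z_def sig_def)

lemma A12: "derivable Md_bot (Times a (Inv a)) (Plus One (Times Zero (Inv a)))"
  using derivable.ax[of "(Times x (Inv x))" "(Plus One (Times Zero (Inv x)))" Md_bot "sig a b c"]
  by (simp add: Md_bot_def x_def y_def z_def sig_def)

lemma A13: "derivable Md_bot (Inv (Times a b)) (Times (Inv a) (Inv b))"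
  using derivable.ax[of "(Inv (Times x y))" "(Times (Inv x) (Inv y))" Md_bot "sig a b c"]
  by (simp add: Md_bot_def x_def y_def z_def sig_def)

lemma eqv: "equivp (derivable Md_bot)"
  by (rule equivpI) (auto simp: reflp_def symp_def transp_def intro: derivable.intros)

quotient_type q = trm / "derivable Md_bot"
  by (rule eqv)

instantiation q :: "{comm_monoid_add, comm_monoid_mult, comm_semiring}"
begin
lift_definition zero_q :: q is Zero .
lift_definition one_q :: q is One .
lift_definition plus_q :: "q \<Rightarrow> q \<Rightarrow> q" is Plus by (rule derivable.cong_plus)
lift_definition times_q :: "q \<Rightarrow> q \<Rightarrow> q" is Times by (rule derivable.cong_times)
instance
proof
  fix a b c :: q
  show "a + b + c = a + (b + c)" by transfer (rule A1)
  show "a + b = b + a" by transfer (rule A2)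
  show "0 + a = a" by transfer (metis A2 A3 derivable.trans)
  show "a * b * c = a * (b * c)" by transfer (rule A5)
  show "a * b = b * a" by transfer (rule A6)
  show "1 * a = a" by transfer (rule A7)
  show "(a + b) * c = a * c + b * c" by transfer
      (metis A6 A8 derivable.trans derivable.cong_plus)
qed
end

lift_definition qneg :: "q \<Rightarrow> q" is Neg by (rule derivable.cong_neg)
lift_definition qinv :: "q \<Rightarrow> q" is Inv by (rule derivable.cong_inv)

lemma Q4: "a + qneg a = 0 * a" by transfer (rule A4)
lemma Q9: "qneg (qneg a) = a" by transfer (rule A9)
lemma Q10: "0 * (a * a) = 0 * (a::q)" by transfer (rule A10)
lemma Q12: "a * qinv a = 1 + 0 * qinv a" by transfer (rule A12)
lemma Q13: "qinv (a * b) = qinv a * qinv b" by transfer (rule A13)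

definition E :: "q \<Rightarrow> q" where "E a = 0 * a"

lemma L1: "a + E a = a"
proof -
  have "a * (1 + 0) = a * 1 + a * 0" by (rule distrib_left)
  then show ?thesis by (simp add: E_def mult.commute)
qed

lemma L2: "0 * (0::q) = 0"
proof -
  have a: "1 + qneg 1 = 0" using Q4[of 1] by simp
  have b: "0 * qneg 1 = 0" using Q4[of "qneg 1"] a by (simp add: Q9 add.commute)
  have "(0::q) * 0 = 0 * (1 + qneg 1)" using a by simp
  also have "\<dots> = 0" by (simp add: distrib_left b)
  finally show ?thesis .
qed

lemma L3: "E a + E a = E a"
proof -
  have "a * (0 + 0) = a * 0 + a * 0" by (rule distrib_left)
  then show ?thesis by (simp add: E_def mult.commute)
qed

lemma L3': "E a + (E a + c) = E a + c"
  by (simp add: add.assoc[symmetric] L3)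

lemma L4: "E (a * b) = E a + E (a * b)"
proof -
  have h: "0 * (1 + 0 * b) = 0 * (b::q)"
    by (simp add: distrib_left mult.assoc[symmetric] L2)
  have "E (a * b) = a * (0 * b)" by (simp add: E_def mult_ac)
  also have "\<dots> = a * (0 * (1 + 0 * b))" using h by simp
  also have "\<dots> = (a * 0) * (1 + 0 * b)" by (rule mult.assoc[symmetric])
  also have "\<dots> = (a * 0) * 1 + (a * 0) * (0 * b)" by (rule distrib_left)
  also have "\<dots> = E a + (0 * 0) * (a * b)" by (simp only: mult_1_right mult_1_left E_def mult_ac)
  also have "\<dots> = E a + E (a * b)" by (simp only: L2 E_def)
  finally show ?thesis .
qed

lemma L5: "E a + E b = E a + E b + E (a * b)"
proof -
  have "E a + E b = E (a + b)" by (simp add: E_def distrib_left)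
  also have "\<dots> = 0 * ((a + b) * (a + b))" by (simp add: E_def Q10)
  also have "\<dots> = 0 * (a * a) + (0 * (a * b) + 0 * (a * b)) + 0 * (b * b)"
    by (simp add: algebra_simps)
  also have "\<dots> = E a + E (a * b) + E b" using L3[of "a*b"] by (simp add: E_def Q10)
  finally have "E a + E b = E a + E (a * b) + E b" .
  then show ?thesis by (metis add.assoc add.commute)
qed

lemma L6: "E (a * b) = E a + E b"
proof -
  have "E (a * b) = E a + (E b + E (a * b))"
    using L4[of a b] L4[of b a] by (metis mult.commute)
  also have "\<dots> = E a + E b" using L5[of a b] by (metis add.assoc)
  finally show ?thesis .
qed

lemma main: "X * qinv Y + U * qinv V = (X * V + U * Y) * qinv (Y * V)"
proof -
  have "(X * V + U * Y) * qinv (Y * V) = X * qinv Y * (V * qinv V) + U * qinv V * (Y * qinv Y)"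
    by (simp add: Q13 algebra_simps)
  also have "\<dots> = X * qinv Y + E (X * qinv Y * qinv V) + (U * qinv V + E (U * qinv V * qinv Y))"
    by (simp add: Q12 E_def algebra_simps)
  also have "\<dots> = X * qinv Y + U * qinv V + (E X + E (qinv Y)) + (E U + E (qinv V))
      + (E (qinv Y) + E (qinv V))"
    by (simp add: L6 add_ac)
  also have "\<dots> = X * qinv Y + U * qinv V + (E X + E (qinv Y)) + (E U + E (qinv V))"
    by (simp add: add_ac L3 L3')
  also have "\<dots> = X * qinv Y + E (X * qinv Y) + (U * qinv V + E (U * qinv V))"
    by (simp add: L6 add_ac)
  also have "\<dots> = X * qinv Y + U * qinv V" by (simp only: L1)
  finally show ?thesis by simp
qed

lemma ap: "abs_q (Plus a b) = abs_q a + abs_q b" by (simp add: plus_q.abs_eq)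
lemma at: "abs_q (Times a b) = abs_q a * abs_q b" by (simp add: times_q.abs_eq)
lemma ai: "abs_q (Inv a) = qinv (abs_q a)" by (simp add: qinv.abs_eq)

theorem proposition2p2:
  shows "derivable Md_bot
           (Plus (Times (Var 0) (Inv (Var 1))) (Times (Var 2) (Inv (Var 3))))
           (Times (Plus (Times (Var 0) (Var 3)) (Times (Var 2) (Var 1)))
                  (Inv (Times (Var 1) (Var 3))))"
proof -
  have "abs_q (Plus (Times (Var 0) (Inv (Var 1))) (Times (Var 2) (Inv (Var 3)))) =
        abs_q (Times (Plus (Times (Var 0) (Var 3)) (Times (Var 2) (Var 1)))
                  (Inv (Times (Var 1) (Var 3))))"
    unfolding ap at ai by (rule main)
  then show ?thesis by (simp only: q.abs_eq_iff)
qed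

end
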